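(* Let $b\ge2$ be an integer, $\lambda\in(1/b,1)$, and let $\phi$ be a $\mathbb{Z}$-periodic, continuous, piecewise $C^2$ function such that $W=W^\phi_{\lambda,b}$ is not Lipschitz. Then for every $\varepsilon>0$ there exists $\delta>0$ such that for every $\mathbf{j}\in\Sigma$ and every $y\in\mathbb{R}$, $\pi_{\mathbf{j}}\mu\big(B(y,\delta)\big)<\varepsilon$.
   Context: $W(x)=\sum_{n\ge0}\lambda^n\phi(b^nx)$. $\mu$ is the pushforward of Lebesgue measure on $[0,1)$ under $x\mapsto(x,W(x))$. $\Sigma=\{0,\dots,b-1\}^{\mathbb{Z}_+}$, $\gamma=1/(b\lambda)$, $Y(x,\mathbf{j})=-\sum_{n\ge1}\gamma^n\phi'\!\left(\frac{x}{b^n}+\frac{j_1}{b^n}+\cdots+\frac{j_n}{b}\right)$ (with one-sided derivatives at break points), $\Gamma_{\mathbf{j}}(x)=\int_0^xY(t,\mathbf{j})dt$, $\pi_{\mathbf{j}}(x,y)=y-\Gamma_{\mathbf{j}}(x)$, and $\pi_{\mathbf{j}}\mu$ is the pushforward of $\mu$ under $\pi_{\mathbf{j}}$. $B(y,r)$ is the open interval of radius $r$ centered at $y$. *)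

theory Defs
  imports "HOL-Analysis.Analysis"
begin

definition C2_on_real :: "(real \<Rightarrow> real) \<Rightarrow> bool" where
  "C2_on_real g \<longleftrightarrow> (\<exists>g' g''. (\<forall>x. (g has_real_derivative g' x) (at x)
        \<and> (g' has_real_derivative g'' x) (at x)) \<and> continuous_on UNIV g'')"

text \<open>Piecewise C^2 on a period [0,1]: finitely many break points
  0 = a 0 < a 1 < ... < a m = 1, and on each closed piece phi agrees with a C^2 function
  (i.e. phi is C^2 up to the endpoints of each piece).  Together with Z-periodicity this
  gives piecewise C^2 on all of R.\<close>
definition piecewise_C2 :: "(real \<Rightarrow> real) \<Rightarrow> bool" where
  "piecewise_C2 \<phi> \<longleftrightarrow> (\<exists>(a::nat \<Rightarrow> real) m. a 0 = 0 \<and> a m = 1 \<and>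
      (\<forall>i<m. a i < a (Suc i) \<and>
         (\<exists>g. C2_on_real g \<and> (\<forall>x\<in>{a i..a (Suc i)}. \<phi> x = g x))))"

text \<open>Right derivative (the one-sided derivative convention used at break points).\<close>
definition rderiv :: "(real \<Rightarrow> real) \<Rightarrow> real \<Rightarrow> real" where
  "rderiv f x = Lim (at_right 0) (\<lambda>h. (f (x + h) - f x) / h)"

definition Wfun :: "(real \<Rightarrow> real) \<Rightarrow> real \<Rightarrow> nat \<Rightarrow> real \<Rightarrow> real" where
  "Wfun \<phi> lam b x = (\<Sum>n. lam ^ n * \<phi> (real b ^ n * x))"

definition graph_measure :: "(real \<Rightarrow> real) \<Rightarrow> real \<Rightarrow> nat \<Rightarrow> (real \<times> real) measure" where
  "graph_measure \<phi> lam b = distr (lebesgue_on {0..<1}) borel (\<lambda>x. (x, Wfun \<phi> lam b x))"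

text \<open>Sigma: sequences j = (j_1, j_2, ...) with digits in {0..b-1}; index 0 is unused.\<close>
definition SigmaSeq :: "nat \<Rightarrow> (nat \<Rightarrow> nat) set" where
  "SigmaSeq b = {j. \<forall>n\<ge>1. j n < b}"

definition Yfun :: "(real \<Rightarrow> real) \<Rightarrow> real \<Rightarrow> nat \<Rightarrow> real \<Rightarrow> (nat \<Rightarrow> nat) \<Rightarrow> real" where
  "Yfun \<phi> lam b x j = - (\<Sum>n. (1 / (real b * lam)) ^ (Suc n) *
      rderiv \<phi> (x / real b ^ (Suc n) + (\<Sum>k=1..Suc n. real (j k) / real b ^ (Suc n - k + 1))))"

definition Gammafun :: "(real \<Rightarrow> real) \<Rightarrow> real \<Rightarrow> nat \<Rightarrow> (nat \<Rightarrow> nat) \<Rightarrow> real \<Rightarrow> real" where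
  "Gammafun \<phi> lam b j x = integral {0..x} (\<lambda>t. Yfun \<phi> lam b t j)"

definition proj_j :: "(real \<Rightarrow> real) \<Rightarrow> real \<Rightarrow> nat \<Rightarrow> (nat \<Rightarrow> nat) \<Rightarrow> real \<times> real \<Rightarrow> real" where
  "proj_j \<phi> lam b j p = snd p - Gammafun \<phi> lam b j (fst p)"

definition proj_measure :: "(real \<Rightarrow> real) \<Rightarrow> real \<Rightarrow> nat \<Rightarrow> (nat \<Rightarrow> nat) \<Rightarrow> real measure" where
  "proj_measure \<phi> lam b j = distr (graph_measure \<phi> lam b) borel (proj_j \<phi> lam b j)"

end

theory Submission
  imports Defs
begin



lemma find_piece:
  fixes a :: "nat \<Rightarrow> real"
  assumes "\<forall>i<m. a i < a (Suc i)" "a 0 \<le> z" "z < a m"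
  shows "\<exists>i<m. a i \<le> z \<and> z < a (Suc i)"
  using assms
proof (induction m)
  case 0 then show ?case by simp
next
  case (Suc m)
  show ?case
  proof (cases "z < a m")
    case True
    then have "\<exists>i<m. a i \<le> z \<and> z < a (Suc i)" using Suc by auto
    then show ?thesis by (meson less_SucI)
  next
    case False then show ?thesis using Suc by auto
  qed
qed

lemma geom_bound:
  fixes f :: "nat \<Rightarrow> real"
  assumes "\<And>n. \<bar>f n\<bar> \<le> C * q ^ n" "0 \<le> q" "q < 1"
  shows "summable f" "\<bar>suminf f\<bar> \<le> C / (1 - q)"
proof -
  have sg: "summable (\<lambda>n. C * q ^ n)" using assms by (intro summable_mult summable_geometric) auto
  show sf: "summable f" by (rule summable_comparison_test[OF _ sg]) (use assms in auto)
  have sa: "summable (\<lambda>n. \<bar>f n\<bar>)" by (rule summable_comparison_test[OF _ sg]) (use assms in auto)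
  have "\<bar>suminf f\<bar> \<le> (\<Sum>n. \<bar>f n\<bar>)" using sa summable_rabs by blast
  also have "\<dots> \<le> (\<Sum>n. C * q ^ n)" using sa sg assms(1) by (intro suminf_le) auto
  also have "\<dots> = C / (1 - q)" using assms by (simp add: suminf_mult suminf_geometric divide_simps)
  finally show "\<bar>suminf f\<bar> \<le> C / (1 - q)" .
qed

lemma geom_tail_bound:
  fixes f :: "nat \<Rightarrow> real"
  assumes "\<And>n. \<bar>f n\<bar> \<le> C * q ^ n" "0 \<le> q" "q < 1" "\<And>n. n < N \<Longrightarrow> f n = 0"
  shows "\<bar>suminf f\<bar> \<le> C * q ^ N / (1 - q)"
proof -
  have sf: "summable f" using geom_bound assms by blast
  have "suminf f = (\<Sum>n. f (n + N))"
    using suminf_minus_initial_segment[OF sf, of N] assms(4) by simp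
  also have "\<bar>\<dots>\<bar> \<le> (C * q ^ N) / (1 - q)"
  proof (rule geom_bound(2))
    show "\<bar>f (n + N)\<bar> \<le> C * q ^ N * q ^ n" for n
      using assms(1)[of "n+N"] by (simp add: power_add mult_ac)
  qed (use assms in auto)
  finally show ?thesis .
qed

locale wsetup =
  fixes b :: nat and lam :: real and \<phi> :: "real \<Rightarrow> real"
  assumes b2: "b \<ge> 2"
    and lam_low: "1 / real b < lam" and lam1: "lam < 1"
    and per: "\<forall>x. \<phi> (x + 1) = \<phi> x"
    and cont: "continuous_on UNIV \<phi>"
    and pwc: "piecewise_C2 \<phi>"
begin

definition "\<gamma> = 1 / (real b * lam)"

lemma bpos: "real b > 0" "real b \<ge> 2" using b2 by auto
lemma lam_pos: "lam > 0" using lam_low bpos by (smt (verit) divide_pos_pos)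
lemma gam_pos: "\<gamma> > 0" using lam_pos bpos by (simp add: \<gamma>_def)
lemma gam1: "\<gamma> < 1"
proof -
  have "real b * lam > 1" using lam_low bpos by (simp add: field_simps)
  then show ?thesis by (simp add: \<gamma>_def)
qed
lemma gam_b_lam: "\<gamma> * real b * lam = 1" using lam_pos bpos by (simp add: \<gamma>_def)

lemma per_int: "\<phi> (x + real_of_int k) = \<phi> x"
proof -
  have pn: "\<phi> (x + real n) = \<phi> x" for x n
  proof (induction n)
    case (Suc n)
    have "\<phi> (x + real (Suc n)) = \<phi> ((x + real n) + 1)" by (simp add: algebra_simps)
    also have "\<dots> = \<phi> (x + real n)" using per by blast
    finally show ?case using Suc by simp
  qed simp
  show ?thesis
  proof (cases "k \<ge> 0")
    case True then show ?thesis using pn[of x "nat k"] by simp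
  next
    case False
    then show ?thesis using pn[of "x + real_of_int k" "nat (-k)"] by simp
  qed
qed

lemma per_frac: "\<phi> x = \<phi> (frac x)"
  using per_int[of "frac x" "\<lfloor>x\<rfloor>"] by (simp add: frac_def)

lemma per_nat: "\<phi> (x + real n) = \<phi> x"
  using per_int[of x "int n"] by simp

lemma phi_bounded: "\<exists>C. \<forall>x. \<bar>\<phi> x\<bar> \<le> C"
proof -
  have "compact (\<phi> ` {0..1})"
    by (rule compact_continuous_image) (use cont continuous_on_subset in auto)
  then obtain C where C: "\<forall>y\<in>\<phi> ` {0..1}. norm y \<le> C"
    using compact_imp_bounded bounded_iff by metis
  have "\<bar>\<phi> x\<bar> \<le> C" for x
    using C per_frac[of x] frac_ge_0[of x] frac_lt_1[of x] by auto
  then show ?thesis by blast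
qed

end



locale wdata = wsetup +
  fixes a :: "nat \<Rightarrow> real" and m :: nat and G G' :: "nat \<Rightarrow> real \<Rightarrow> real"
  assumes a0: "a 0 = 0" and am: "a m = 1" and a_incr: "\<forall>i<m. a i < a (Suc i)"
    and Gder: "\<forall>i<m. \<forall>x. (G i has_real_derivative G' i x) (at x)"
    and G'cont: "\<forall>i<m. continuous_on UNIV (G' i)"
    and agree: "\<forall>i<m. \<forall>x\<in>{a i..a (Suc i)}. \<phi> x = G i x"

lemma (in wsetup) wdata_exists: "\<exists>a m G G'. wdata b lam \<phi> a m G G'"
proof -
  obtain a m where am: "a 0 = 0" "a m = 1"
    and H: "\<forall>i<m. a i < a (Suc i) \<and> (\<exists>g. C2_on_real g \<and> (\<forall>x\<in>{a i..a (Suc i)}. \<phi> x = g x))"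
    using pwc unfolding piecewise_C2_def by blast
  have "\<forall>i<m. \<exists>gg. C2_on_real (fst gg) \<and> (\<forall>x. (fst gg has_real_derivative snd gg x) (at x))
           \<and> continuous_on UNIV (snd gg) \<and> (\<forall>x\<in>{a i..a (Suc i)}. \<phi> x = fst gg x)"
  proof (intro allI impI)
    fix i assume "i < m"
    then obtain g where g: "C2_on_real g" "\<forall>x\<in>{a i..a (Suc i)}. \<phi> x = g x" using H by blast
    then obtain g' g'' where d: "\<forall>x. (g has_real_derivative g' x) (at x) \<and> (g' has_real_derivative g'' x) (at x)"
      unfolding C2_on_real_def by blast
    have "continuous_on UNIV g'"
      using d by (meson DERIV_isCont continuous_at_imp_continuous_on)
    then show "\<exists>gg. C2_on_real (fst gg) \<and> (\<forall>x. (fst gg has_real_derivative snd gg x) (at x))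
           \<and> continuous_on UNIV (snd gg) \<and> (\<forall>x\<in>{a i..a (Suc i)}. \<phi> x = fst gg x)"
      using g d by (intro exI[of _ "(g, g')"]) auto
  qed
  then obtain gg where gg: "\<forall>i<m. C2_on_real (fst (gg i)) \<and> (\<forall>x. (fst (gg i) has_real_derivative snd (gg i) x) (at x))
           \<and> continuous_on UNIV (snd (gg i)) \<and> (\<forall>x\<in>{a i..a (Suc i)}. \<phi> x = fst (gg i) x)"
    by metis
  have "wdata b lam \<phi> a m (\<lambda>i. fst (gg i)) (\<lambda>i. snd (gg i))"
    using gg am H by (unfold_locales) auto
  then show ?thesis by blast
qed

context wdata begin

lemma piece: "\<exists>i<m. a i \<le> frac x \<and> frac x < a (Suc i)"
  by (rule find_piece) (use a_incr a0 am frac_ge_0 frac_lt_1 in auto)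

lemma rlim:
  assumes i: "i < m" "a i \<le> frac x" "frac x < a (Suc i)"
  shows "((\<lambda>h. (\<phi> (x + h) - \<phi> x) / h) \<longlongrightarrow> G' i (frac x)) (at_right 0)"
proof -
  define z where "z = frac x"
  have d: "((\<lambda>h. (G i (z + h) - G i z) / h) \<longlongrightarrow> G' i z) (at 0)"
    using Gder i by (simp add: DERIV_def)
  then have d': "((\<lambda>h. (G i (z + h) - G i z) / h) \<longlongrightarrow> G' i z) (at_right 0)"
    using filterlim_at_split by blast
  have ev: "eventually (\<lambda>h. (G i (z + h) - G i z) / h = (\<phi> (x + h) - \<phi> x) / h) (at_right 0)"
    unfolding eventually_at_right_field
  proof (intro exI[of _ "a (Suc i) - z"] conjI allI impI)
    show "0 < a (Suc i) - z" using i z_def by simp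
    fix h :: real assume h: "0 < h" "h < a (Suc i) - z"
    have e: "x + h = (z + h) + real_of_int \<lfloor>x\<rfloor>" using z_def by (simp add: frac_def)
    have "\<phi> (x + h) = \<phi> (z + h)" unfolding e by (rule per_int)
    also have "\<dots> = G i (z + h)" using agree i h z_def by auto
    finally have 1: "\<phi> (x + h) = G i (z + h)" .
    have "\<phi> x = G i z" using agree i z_def per_frac[of x] by auto
    then show "(G i (z + h) - G i z) / h = (\<phi> (x + h) - \<phi> x) / h" using 1 by simp
  qed
  show ?thesis using tendsto_cong[OF ev] d' z_def by simp
qed

lemma rder_eq:
  assumes i: "i < m" "a i \<le> frac x" "frac x < a (Suc i)"
  shows "rderiv \<phi> x = G' i (frac x)"
  unfolding rderiv_def by (rule tendsto_Lim) (use rlim[OF i] in auto)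

lemma rder_tendsto: "((\<lambda>h. (\<phi> (x + h) - \<phi> x) / h) \<longlongrightarrow> rderiv \<phi> x) (at_right 0)"
  using piece[of x] rlim rder_eq by metis

lemma rder_bound: "\<exists>D\<ge>0. \<forall>x. \<bar>rderiv \<phi> x\<bar> \<le> D"
proof -
  have "\<forall>i<m. \<exists>B. \<forall>z\<in>{a i..a (Suc i)}. \<bar>G' i z\<bar> \<le> B"
  proof (intro allI impI)
    fix i assume "i < m"
    have "compact (G' i ` {a i..a (Suc i)})"
      by (rule compact_continuous_image) (use continuous_on_subset[OF G'cont[rule_format, OF \<open>i<m\<close>]] in auto)
    then obtain B where "\<forall>y\<in>G' i ` {a i..a (Suc i)}. norm y \<le> B"
      using compact_imp_bounded bounded_iff by metis
    then show "\<exists>B. \<forall>z\<in>{a i..a (Suc i)}. \<bar>G' i z\<bar> \<le> B" by auto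
  qed
  then obtain B where B: "\<forall>i<m. \<forall>z\<in>{a i..a (Suc i)}. \<bar>G' i z\<bar> \<le> B i" by metis
  define D where "D = (\<Sum>i<m. \<bar>B i\<bar>)"
  have "\<bar>rderiv \<phi> x\<bar> \<le> D" for x
  proof -
    obtain i where i: "i < m" "a i \<le> frac x" "frac x < a (Suc i)" using piece by blast
    have "\<bar>rderiv \<phi> x\<bar> \<le> B i" using rder_eq[OF i] B i by auto
    also have "\<dots> \<le> \<bar>B i\<bar>" by simp
    also have "\<dots> \<le> D" unfolding D_def using i(1) by (intro member_le_sum) auto
    finally show ?thesis .
  qed
  moreover have "D \<ge> 0" unfolding D_def by (simp add: sum_nonneg)
  ultimately show ?thesis by blast
qed

lemma phi_meas: "\<phi> \<in> borel_measurable borel"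
  using cont by (rule borel_measurable_continuous_onI)

lemma rder_meas: "rderiv \<phi> \<in> borel_measurable borel"
proof (rule borel_measurable_LIMSEQ_real)
  fix x
  have f: "filterlim (\<lambda>n. 1 / real (Suc n)) (at_right 0) sequentially"
    by (rule tendsto_imp_filterlim_at_right) (auto intro: LIMSEQ_Suc[OF lim_inverse_n'] simp del: of_nat_Suc)
  show "(\<lambda>n. (\<phi> (x + 1 / real (Suc n)) - \<phi> x) / (1 / real (Suc n))) \<longlonglongrightarrow> rderiv \<phi> x"
    using filterlim_compose[OF rder_tendsto f] by (simp add: o_def)
next
  fix n
  show "(\<lambda>x. (\<phi> (x + 1 / real (Suc n)) - \<phi> x) / (1 / real (Suc n))) \<in> borel_measurable borel"
    by (intro borel_measurable_continuous_onI continuous_intros continuous_on_compose2[OF cont]) auto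
qed

lemma rder_deriv:
  assumes "frac x \<notin> a ` {..m}"
  shows "(\<phi> has_real_derivative rderiv \<phi> x) (at x)"
proof -
  obtain i where i: "i < m" "a i \<le> frac x" "frac x < a (Suc i)" using piece by blast
  have lt: "a i < frac x" using i assms by (metis atMost_iff imageI less_imp_le_nat order_le_less)
  define k where "k = real_of_int \<lfloor>x\<rfloor>"
  have xk: "x = frac x + k" by (simp add: k_def frac_def)
  have dd: "(G i has_real_derivative G' i (x - k)) (at (x - k))" using Gder i(1) by auto
  have "((\<lambda>t. G i (t - k)) has_real_derivative G' i (x - k) * 1) (at x)"
  proof (rule DERIV_chain2[where f="G i" and g="\<lambda>t. t - k"])
    show "(G i has_real_derivative G' i (x - k)) (at ((\<lambda>t. t - k) x))" using dd by simp
  qed (auto intro!: derivative_eq_intros)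
  moreover have "x - k = frac x" using xk by simp
  ultimately have d: "((\<lambda>t. G i (t - k)) has_real_derivative G' i (frac x)) (at x)" by simp
  show ?thesis unfolding rder_eq[OF i]
  proof (rule has_field_derivative_transform_within_open[OF d, of "{a i + k <..< a (Suc i) + k}"])
    show "open {a i + k<..<a (Suc i) + k}" by simp
    show "x \<in> {a i + k<..<a (Suc i) + k}" using lt i xk by auto
    fix t assume t: "t \<in> {a i + k<..<a (Suc i) + k}"
    have "\<phi> t = \<phi> (t - k)" using per_int[of "t - k" "\<lfloor>x\<rfloor>"] by (simp add: k_def)
    also have "\<dots> = G i (t - k)" using agree i t by auto
    finally show "G i (t - k) = \<phi> t" by simp
  qed
qed

end



context wdata begin

definition "Cphi = (SOME C. \<forall>x. \<bar>\<phi> x\<bar> \<le> C)"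
lemma Cphi: "\<bar>\<phi> x\<bar> \<le> Cphi"
  using someI_ex[OF phi_bounded] unfolding Cphi_def by blast
lemma Cphi_nn: "Cphi \<ge> 0" using Cphi[of 0] by simp

definition "Dr = (SOME D. D \<ge> 0 \<and> (\<forall>x. \<bar>rderiv \<phi> x\<bar> \<le> D))"
lemma Dr: "\<bar>rderiv \<phi> x\<bar> \<le> Dr" and Dr_nn: "Dr \<ge> 0"
  using someI_ex[OF rder_bound] unfolding Dr_def by blast+

abbreviation "W \<equiv> Wfun \<phi> lam b"

lemma W_term_bound: "\<bar>lam ^ n * \<phi> (real b ^ n * x)\<bar> \<le> Cphi * lam ^ n"
  using Cphi[of "real b ^ n * x"] lam_pos
  by (simp add: abs_mult mult.commute mult_right_mono)

lemma W_summable: "summable (\<lambda>n. lam ^ n * \<phi> (real b ^ n * x))"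
  using geom_bound(1)[OF W_term_bound] lam_pos lam1 by simp

lemma W_bound: "\<bar>W x\<bar> \<le> Cphi / (1 - lam)"
  unfolding Wfun_def using geom_bound(2)[OF W_term_bound] lam_pos lam1 by simp

lemma W_cont: "continuous_on UNIV W"
proof -
  have u: "uniform_limit UNIV (\<lambda>n x. \<Sum>i<n. lam ^ i * \<phi> (real b ^ i * x)) (\<lambda>x. \<Sum>i. lam ^ i * \<phi> (real b ^ i * x)) sequentially"
    by (rule Weierstrass_m_test[where M="\<lambda>n. Cphi * lam ^ n"])
       (use W_term_bound lam_pos lam1 in \<open>auto intro!: summable_mult summable_geometric\<close>)
  show ?thesis unfolding Wfun_def
    by (rule uniform_limit_theorem[OF _ u])
       (auto intro!: always_eventually continuous_intros continuous_on_compose2[OF cont])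
qed

lemma W_per: "W (x + 1) = W x"
proof -
  have "\<phi> (real b ^ n * (x + 1)) = \<phi> (real b ^ n * x)" for n
    using per_nat[of "real b ^ n * x" "b ^ n"] by (simp add: algebra_simps)
  then show ?thesis unfolding Wfun_def by simp
qed

lemma W_func: "W ((x + real i) / real b) = \<phi> ((x + real i) / real b) + lam * W x"
proof -
  let ?f = "\<lambda>n. lam ^ n * \<phi> (real b ^ n * ((x + real i) / real b))"
  have s: "summable ?f" by (rule W_summable)
  have t: "?f (Suc n) = lam * (lam ^ n * \<phi> (real b ^ n * x))" for n
  proof -
    have "real b ^ Suc n * ((x + real i) / real b) = real b ^ n * x + real (b ^ n * i)"
      using bpos by (simp add: field_simps)
    then show ?thesis using per_nat[of "real b ^ n * x" "b ^ n * i"] by simp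
  qed
  have "W ((x + real i) / real b) = ?f 0 + (\<Sum>n. ?f (Suc n))"
    unfolding Wfun_def using suminf_split_head[OF s] by simp
  also have "(\<Sum>n. ?f (Suc n)) = lam * W x"
    unfolding t Wfun_def using W_summable by (simp add: suminf_mult)
  finally show ?thesis by simp
qed

fun Gr :: "real \<Rightarrow> (nat \<Rightarrow> nat) \<Rightarrow> nat \<Rightarrow> real" where
  "Gr x j 0 = x"
| "Gr x j (Suc n) = (Gr x j n + real (j (Suc n))) / real b"

declare Gr.simps(2)[simp del]

lemma Gr_eq: "x / real b ^ n + (\<Sum>k=1..n. real (j k) / real b ^ (n - k + 1)) = Gr x j n"
proof (induction n)
  case 0 then show ?case by simp
next
  case (Suc n)
  have "(\<Sum>k=1..Suc n. real (j k) / real b ^ (Suc n - k + 1))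
      = (\<Sum>k=1..n. real (j k) / real b ^ (Suc n - k + 1)) + real (j (Suc n)) / real b"
    by simp
  also have "(\<Sum>k=1..n. real (j k) / real b ^ (Suc n - k + 1)) = (\<Sum>k=1..n. real (j k) / real b ^ (n - k + 1)) / real b"
    unfolding sum_divide_distrib
    by (rule sum.cong) (auto simp: Suc_diff_le)
  finally show ?case using Suc[symmetric] bpos by (simp add: field_simps Gr.simps)
qed

lemma Gr_cont: "continuous_on UNIV (\<lambda>x. Gr x j n)"
  by (induction n) (use bpos in \<open>auto intro!: continuous_intros simp: Gr.simps\<close>)

abbreviation "Y \<equiv> Yfun \<phi> lam b"

lemma Y_alt: "Y x j = - (\<Sum>n. \<gamma> ^ Suc n * rderiv \<phi> (Gr x j (Suc n)))"
  unfolding Yfun_def \<gamma>_def using Gr_eq by presburger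

lemma Y_term_bound: "\<bar>\<gamma> ^ Suc n * rderiv \<phi> (Gr x j (Suc n))\<bar> \<le> (Dr * \<gamma>) * \<gamma> ^ n"
  using Dr[of "Gr x j (Suc n)"] gam_pos
  by (simp add: abs_mult mult_ac mult_left_mono)

lemma Y_summable: "summable (\<lambda>n. \<gamma> ^ Suc n * rderiv \<phi> (Gr x j (Suc n)))"
  using geom_bound(1)[OF Y_term_bound] gam_pos gam1 by simp

definition "CY = Dr * \<gamma> / (1 - \<gamma>)"

lemma CY_nn: "CY \<ge> 0" unfolding CY_def using Dr_nn gam_pos gam1 by simp

lemma Y_bound: "\<bar>Y x j\<bar> \<le> CY"
  unfolding Y_alt CY_def using geom_bound(2)[OF Y_term_bound] gam_pos gam1 by simp

lemma Y_meas: "(\<lambda>x. Y x j) \<in> borel_measurable borel"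
proof -
  have "(\<lambda>x. \<Sum>n. \<gamma> ^ Suc n * rderiv \<phi> (Gr x j (Suc n))) \<in> borel_measurable borel"
  proof (rule borel_measurable_LIMSEQ_real)
    fix x show "(\<lambda>N. \<Sum>n<N. \<gamma> ^ Suc n * rderiv \<phi> (Gr x j (Suc n))) \<longlonglongrightarrow> (\<Sum>n. \<gamma> ^ Suc n * rderiv \<phi> (Gr x j (Suc n)))"
      using summable_LIMSEQ[OF Y_summable] .
  next
    fix N
    have "(\<lambda>x. rderiv \<phi> (Gr x j (Suc n))) \<in> borel_measurable borel" for n
      using measurable_compose[OF borel_measurable_continuous_onI[OF Gr_cont] rder_meas] by (simp add: o_def)
    then show "(\<lambda>x. \<Sum>n<N. \<gamma> ^ Suc n * rderiv \<phi> (Gr x j (Suc n))) \<in> borel_measurable borel"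
      by (intro borel_measurable_sum borel_measurable_times) auto
  qed
  then show ?thesis unfolding Y_alt by simp
qed

lemma Gr_agree: "(\<forall>k\<in>{1..N}. j k = j' k) \<Longrightarrow> n \<le> N \<Longrightarrow> Gr x j n = Gr x j' n"
  by (induction n) (auto simp: Gr.simps)

lemma Y_agree:
  assumes "\<forall>k\<in>{1..N}. j k = j' k"
  shows "\<bar>Y x j - Y x j'\<bar> \<le> 2 * Dr * \<gamma> * \<gamma> ^ N / (1 - \<gamma>)"
proof -
  let ?f = "\<lambda>n. \<gamma> ^ Suc n * rderiv \<phi> (Gr x j (Suc n)) - \<gamma> ^ Suc n * rderiv \<phi> (Gr x j' (Suc n))"
  have "Y x j - Y x j' = - ((\<Sum>n. \<gamma> ^ Suc n * rderiv \<phi> (Gr x j (Suc n))) - (\<Sum>n. \<gamma> ^ Suc n * rderiv \<phi> (Gr x j' (Suc n))))"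
    unfolding Y_alt by simp
  also have "\<dots> = - suminf ?f"
    using suminf_diff[OF Y_summable Y_summable] by simp
  finally have "Y x j - Y x j' = - suminf ?f" .
  moreover have "\<bar>suminf ?f\<bar> \<le> (2 * Dr * \<gamma>) * \<gamma> ^ N / (1 - \<gamma>)"
  proof (rule geom_tail_bound)
    show "\<bar>?f n\<bar> \<le> 2 * Dr * \<gamma> * \<gamma> ^ n" for n
      using Y_term_bound[of n x j] Y_term_bound[of n x j'] by linarith
    show "?f n = 0" if "n < N" for n using Gr_agree[OF assms, of "Suc n"] that by simp
  qed (use gam_pos gam1 in auto)
  ultimately show ?thesis by simp
qed

definition cns :: "nat \<Rightarrow> (nat \<Rightarrow> nat) \<Rightarrow> nat \<Rightarrow> nat" where
  "cns i j = (\<lambda>n. if n \<le> 1 then i else j (n - 1))"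

lemma cns_Sigma: "i < b \<Longrightarrow> j \<in> SigmaSeq b \<Longrightarrow> cns i j \<in> SigmaSeq b"
  unfolding SigmaSeq_def cns_def by auto

lemma Gr_cns: "Gr x (cns i j) (Suc n) = Gr ((x + real i) / real b) j n"
  by (induction n) (auto simp: cns_def Gr.simps)

lemma Y_cns: "Y x (cns i j) = \<gamma> * (Y ((x + real i) / real b) j - rderiv \<phi> ((x + real i) / real b))"
proof -
  let ?g = "(x + real i) / real b"
  let ?f = "\<lambda>n. \<gamma> ^ Suc n * rderiv \<phi> (Gr x (cns i j) (Suc n))"
  have s: "summable ?f" by (rule Y_summable)
  have "suminf ?f = ?f 0 + (\<Sum>n. ?f (Suc n))" using suminf_split_head[OF s] by simp
  also have "?f 0 = \<gamma> * rderiv \<phi> ?g" using Gr_cns[of x i j 0] by simp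
  also have "(\<Sum>n. ?f (Suc n)) = \<gamma> * (\<Sum>n. \<gamma> ^ Suc n * rderiv \<phi> (Gr ?g j (Suc n)))"
  proof -
    have "(\<Sum>n. ?f (Suc n)) = (\<Sum>n. \<gamma> * (\<gamma> ^ Suc n * rderiv \<phi> (Gr ?g j (Suc n))))"
      using Gr_cns[of x i j] by (simp add: mult_ac)
    also have "\<dots> = \<gamma> * (\<Sum>n. \<gamma> ^ Suc n * rderiv \<phi> (Gr ?g j (Suc n)))"
      by (rule suminf_mult[OF Y_summable])
    finally show ?thesis .
  qed
  finally show ?thesis unfolding Y_alt[of x] Y_alt[of ?g] by (simp add: algebra_simps)
qed

end



lemma borel_to_lebesgue_on: "(f::real\<Rightarrow>real) \<in> borel_measurable borel \<Longrightarrow> f \<in> borel_measurable (lebesgue_on S)"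
  by (metis measurable_lborel2 measurable_restrict_space1 measurable_completion)

context wdata begin

lemma Y_integrable: "(\<lambda>t. Y t j) integrable_on {p..q}"
  by (rule measurable_bounded_by_integrable_imp_integrable_real[where g="\<lambda>_. CY"])
     (auto intro: borel_to_lebesgue_on Y_meas Y_bound)

abbreviation "Gam \<equiv> Gammafun \<phi> lam b"

lemma Gam_nonpos: "x \<le> 0 \<Longrightarrow> Gam j x = 0"
  unfolding Gammafun_def by (metis box_real(2) content_real_eq_0 integral_null)

lemma Gam_diff: "0 \<le> x \<Longrightarrow> x \<le> x' \<Longrightarrow> Gam j x' - Gam j x = integral {x..x'} (\<lambda>t. Y t j)"
  unfolding Gammafun_def using Henstock_Kurzweil_Integration.integral_combine[OF _ _ Y_integrable, of 0 x x' j] by simp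

lemma Gam_lip_le: "x \<le> x' \<Longrightarrow> \<bar>Gam j x' - Gam j x\<bar> \<le> CY * (x' - x)"
proof -
  have main: "\<bar>Gam j x' - Gam j x\<bar> \<le> CY * (x' - x)" if "0 \<le> x" "x \<le> x'" for x x'
  proof -
    have "norm (integral {x..x'} (\<lambda>t. Y t j)) \<le> CY * Henstock_Kurzweil_Integration.content {x..x'}"
      by (rule has_integral_bound_real[where S="{}"]) (use CY_nn Y_bound Y_integrable in auto)
    then show ?thesis using Gam_diff[OF that] that by simp
  qed
  assume xx: "x \<le> x'"
  show ?thesis
  proof (cases "0 \<le> x")
    case True then show ?thesis using main xx by blast
  next
    case False
    show ?thesis
    proof (cases "x' \<le> 0")
      case True then show ?thesis using Gam_nonpos[of x j] Gam_nonpos[of x' j] CY_nn xx by simp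
    next
      case f2: False
      have "\<bar>Gam j x' - Gam j 0\<bar> \<le> CY * (x' - 0)" using main[of 0 x'] f2 by simp
      then show ?thesis using Gam_nonpos[of x j] Gam_nonpos[of 0 j] False CY_nn
        by (smt (verit) mult_left_mono)
    qed
  qed
qed

lemma Gam_lip: "\<bar>Gam j x - Gam j x'\<bar> \<le> CY * \<bar>x - x'\<bar>"
  using Gam_lip_le[of x x' j] Gam_lip_le[of x' x j] by (cases "x \<le> x'") (auto simp: abs_minus_commute)

lemma Gam_cont: "continuous_on UNIV (Gam j)"
proof (rule lipschitz_on_continuous_on)
  show "CY-lipschitz_on UNIV (Gam j)"
    unfolding lipschitz_on_def dist_real_def using CY_nn Gam_lip by auto
qed

lemma Gam_bound: "0 \<le> x \<Longrightarrow> \<bar>Gam j x\<bar> \<le> CY * x"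
  using Gam_lip[of j x 0] Gam_nonpos[of 0 j] by simp

lemma break_finite:
  fixes p q :: real
  shows "finite {z \<in> {p..q}. frac z \<in> a ` {..m}}"
proof (rule finite_subset)
  show "{z \<in> {p..q}. frac z \<in> a ` {..m}} \<subseteq> (\<lambda>(k, s). real_of_int k + s) ` ({\<lfloor>p\<rfloor>..\<lfloor>q\<rfloor>} \<times> a ` {..m})"
  proof
    fix z assume z: "z \<in> {z \<in> {p..q}. frac z \<in> a ` {..m}}"
    have "\<lfloor>z\<rfloor> \<in> {\<lfloor>p\<rfloor>..\<lfloor>q\<rfloor>}" using z floor_mono by auto
    moreover have "z = real_of_int \<lfloor>z\<rfloor> + frac z" by (simp add: frac_def)
    ultimately show "z \<in> (\<lambda>(k, s). real_of_int k + s) ` ({\<lfloor>p\<rfloor>..\<lfloor>q\<rfloor>} \<times> a ` {..m})"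
      using z by (intro image_eqI[of _ _ "(\<lfloor>z\<rfloor>, frac z)"]) auto
  qed
qed auto

lemma phi_integral:
  assumes x: "0 \<le> x"
  shows "((\<lambda>t. rderiv \<phi> ((t + real i) / real b)) has_integral
           (real b * (\<phi> ((x + real i) / real b) - \<phi> (real i / real b)))) {0..x}"
proof -
  define S where "S = (\<lambda>z. real b * z - real i) ` {z \<in> {real i / real b..(x + real i) / real b}. frac z \<in> a ` {..m}}"
  have fS: "finite S" unfolding S_def using break_finite by blast
  have "((\<lambda>t. real b * \<phi> ((t + real i) / real b)) has_vector_derivative rderiv \<phi> ((t + real i) / real b)) (at t)"
    if t: "t \<in> {0<..<x} - S" for t
  proof -
    have nb: "frac ((t + real i) / real b) \<notin> a ` {..m}"
    proof
      assume "frac ((t + real i) / real b) \<in> a ` {..m}"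
      moreover have "(t + real i) / real b \<in> {real i / real b..(x + real i) / real b}"
        using t bpos by (auto simp: divide_right_mono)
      moreover have "t = real b * ((t + real i) / real b) - real i" using bpos by (simp add: field_simps)
      ultimately have "t \<in> S" unfolding S_def by blast
      then show False using t by blast
    qed
    have d: "(\<phi> has_real_derivative rderiv \<phi> ((t + real i) / real b)) (at ((\<lambda>t. (t + real i) / real b) t))"
      using rder_deriv[OF nb] by simp
    have "((\<lambda>t. \<phi> ((t + real i) / real b)) has_real_derivative rderiv \<phi> ((t + real i) / real b) * (1 / real b)) (at t)"
      by (rule DERIV_chain2[where f=\<phi> and g="\<lambda>t. (t + real i) / real b", OF d]) (use bpos in \<open>auto intro!: derivative_eq_intros\<close>)
    then have "((\<lambda>t. real b * \<phi> ((t + real i) / real b)) has_real_derivative real b * (rderiv \<phi> ((t + real i) / real b) * (1 / real b))) (at t)"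
      by (rule DERIV_cmult)
    then show ?thesis using bpos by (simp add: has_real_derivative_iff_has_vector_derivative)
  qed
  moreover have "continuous_on {0..x} (\<lambda>t. real b * \<phi> ((t + real i) / real b))"
    by (intro continuous_intros continuous_on_compose2[OF cont]) (use b2 in auto)
  ultimately have "((\<lambda>t. rderiv \<phi> ((t + real i) / real b)) has_integral
     (real b * \<phi> ((x + real i) / real b) - real b * \<phi> ((0 + real i) / real b))) {0..x}"
    by (intro fundamental_theorem_of_calculus_interior_strong[OF fS x]) auto
  then show ?thesis by (simp add: algebra_simps)
qed

lemma Y_affine_integral:
  assumes x: "0 \<le> x"
  shows "((\<lambda>t. Y ((t + real i) / real b) j) has_integral
           (real b * (Gam j ((x + real i) / real b) - Gam j (real i / real b)))) {0..x}"
proof -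
  have lo: "0 \<le> real i / real b" and hi: "real i / real b \<le> (x + real i) / real b"
    using bpos x by (auto simp: divide_right_mono)
  have I: "((\<lambda>t. Y t j) has_integral (Gam j ((x + real i) / real b) - Gam j (real i / real b))) (cbox (real i / real b) ((x + real i) / real b))"
    using Gam_diff[OF lo hi, of j] Y_integrable by (simp add: integrable_integral)
  have "((\<lambda>t. Y ((1 / real b) *\<^sub>R t + real i / real b) j) has_integral
        (1 / \<bar>1 / real b\<bar> ^ DIM(real)) *\<^sub>R (Gam j ((x + real i) / real b) - Gam j (real i / real b)))
        ((\<lambda>t. (1 / (1 / real b)) *\<^sub>R t + - ((1 / (1 / real b)) *\<^sub>R (real i / real b))) ` cbox (real i / real b) ((x + real i) / real b))"
    by (rule has_integral_affinity[OF I]) (use bpos in simp)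
  moreover have "(\<lambda>t. (1 / (1 / real b)) *\<^sub>R t + - ((1 / (1 / real b)) *\<^sub>R (real i / real b))) ` cbox (real i / real b) ((x + real i) / real b) = {0..x}"
  proof -
    have "(\<lambda>t. real b * t + - real i) ` {real i / real b..(x + real i) / real b} = {real b * (real i / real b) + - real i .. real b * ((x + real i) / real b) + - real i}"
      using image_affinity_atLeastAtMost[of "real b" "- real i" "real i / real b" "(x + real i) / real b"] hi bpos by simp
    then show ?thesis using bpos by (simp add: field_simps)
  qed
  moreover have "(\<lambda>t. Y ((1 / real b) *\<^sub>R t + real i / real b) j) = (\<lambda>t. Y ((t + real i) / real b) j)"
    by (simp add: add_divide_distrib)
  ultimately show ?thesis using bpos by simp
qed

lemma Gam_cns:
  assumes x: "0 \<le> x"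
  shows "Gam (cns i j) x = (Gam j ((x + real i) / real b) - Gam j (real i / real b)) / lam
           - (\<phi> ((x + real i) / real b) - \<phi> (real i / real b)) / lam"
proof -
  have "((\<lambda>t. Y t (cns i j)) has_integral
     \<gamma> * (real b * (Gam j ((x + real i) / real b) - Gam j (real i / real b))
     - real b * (\<phi> ((x + real i) / real b) - \<phi> (real i / real b)))) {0..x}"
    unfolding Y_cns
    by (intro has_integral_diff has_integral_mult_right Y_affine_integral phi_integral x)
  then have "Gam (cns i j) x = \<gamma> * (real b * (Gam j ((x + real i) / real b) - Gam j (real i / real b))
     - real b * (\<phi> ((x + real i) / real b) - \<phi> (real i / real b)))"
    unfolding Gammafun_def by (rule integral_unique)
  also have "\<dots> = (\<gamma> * real b) * ((Gam j ((x + real i) / real b) - Gam j (real i / real b))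
     - (\<phi> ((x + real i) / real b) - \<phi> (real i / real b)))"
    by (simp add: algebra_simps)
  also have "\<gamma> * real b = 1 / lam" using lam_pos bpos by (simp add: \<gamma>_def)
  finally show ?thesis by (simp add: diff_divide_distrib)
qed

definition F :: "(nat \<Rightarrow> nat) \<Rightarrow> real \<Rightarrow> real" where
  "F j x = W x - Gam j x"

lemma F_cns:
  assumes x: "0 \<le> x"
  shows "F j ((x + real i) / real b) = lam * F (cns i j) x + (\<phi> (real i / real b) - Gam j (real i / real b))"
proof -
  define Q where "Q = (Gam j ((x + real i) / real b) - Gam j (real i / real b))
           - (\<phi> ((x + real i) / real b) - \<phi> (real i / real b))"
  have e: "Gam (cns i j) x = Q / lam" unfolding Q_def using Gam_cns[OF x, of i j] by (simp add: diff_divide_distrib)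
  have "lam * Gam (cns i j) x = Q" using e lam_pos by simp
  then have "lam * Gam (cns i j) x = (Gam j ((x + real i) / real b) - Gam j (real i / real b))
           - (\<phi> ((x + real i) / real b) - \<phi> (real i / real b))" unfolding Q_def .
  then show ?thesis using W_func[of x i] unfolding F_def right_diff_distrib by linarith
qed

lemma F_cont: "continuous_on UNIV (F j)"
  unfolding F_def using W_cont Gam_cont by (intro continuous_intros) auto

definition "BF = Cphi / (1 - lam) + CY"

lemma F_bound:
  assumes "x \<in> {0..1}" shows "\<bar>F j x\<bar> \<le> BF"
proof -
  have "CY * x \<le> CY * 1" using assms CY_nn by (intro mult_left_mono) auto
  then show ?thesis unfolding F_def BF_def using W_bound[of x] Gam_bound[of x j] assms by auto
qed

lemma F_agree:
  assumes "\<forall>k\<in>{1..N}. j k = j' k" "x \<in> {0..1}"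
  shows "\<bar>F j x - F j' x\<bar> \<le> 2 * Dr * \<gamma> * \<gamma> ^ N / (1 - \<gamma>)"
proof -
  let ?B = "2 * Dr * \<gamma> * \<gamma> ^ N / (1 - \<gamma>)"
  have B: "?B \<ge> 0" using Dr_nn gam_pos gam1 by simp
  have "((\<lambda>t. Y t j - Y t j') has_integral (Gam j x - Gam j' x)) {0..x}"
    unfolding Gammafun_def by (intro has_integral_diff integrable_integral Y_integrable)
  then have "norm (Gam j x - Gam j' x) \<le> ?B * Henstock_Kurzweil_Integration.content {0..x}"
    by (rule has_integral_bound_real[OF B finite.emptyI]) (use Y_agree[OF assms(1)] in auto)
  also have "\<dots> \<le> ?B * 1" using assms(2) B by (intro mult_left_mono) auto
  finally show ?thesis unfolding F_def by simp
qed

end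



context wdata begin

definition "SL j y d = {x \<in> {0..<1}. \<bar>F j x - y\<bar> \<le> d}"
definition "Lm j y d = measure lebesgue (SL j y d)"
definition "A j y = {x \<in> {0..<1}. F j x = y}"
definition "aa j y = measure lebesgue (A j y)"

lemma F_meas: "F j \<in> borel_measurable borel"
  using F_cont by (rule borel_measurable_continuous_onI)

lemma sets_leb_of_borel: "S \<in> sets borel \<Longrightarrow> S \<in> sets lebesgue"
  by (metis sets_completionI_sets sets_lborel)

lemma SL_meas: "SL j y d \<in> lmeasurable"
proof (rule bounded_set_imp_lmeasurable)
  show "bounded (SL j y d)" unfolding SL_def by (rule bounded_subset[of "{0..1}"]) auto
  have "closed {x. \<bar>F j x - y\<bar> \<le> d}"
    by (intro closed_Collect_le continuous_intros F_cont)
  then have "{x. \<bar>F j x - y\<bar> \<le> d} \<in> sets borel" by (rule borel_closed)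
  moreover have "{0..<1::real} \<in> sets borel" by simp
  ultimately have "{0..<1} \<inter> {x. \<bar>F j x - y\<bar> \<le> d} \<in> sets borel" by blast
  moreover have "SL j y d = {0..<1} \<inter> {x. \<bar>F j x - y\<bar> \<le> d}" unfolding SL_def by blast
  ultimately show "SL j y d \<in> sets lebesgue" using sets_leb_of_borel by simp
qed

lemma A_SL: "A j y = SL j y 0" unfolding A_def SL_def by auto

lemma A_meas: "A j y \<in> lmeasurable" using SL_meas A_SL by simp

lemma aa_Lm: "aa j y = Lm j y 0" unfolding aa_def Lm_def A_SL ..

lemma SL_mono: "d \<le> d' \<Longrightarrow> SL j y d \<subseteq> SL j y d'" unfolding SL_def by auto

lemma Lm_le1: "Lm j y d \<le> 1"
proof -
  have "Lm j y d \<le> measure lebesgue {0..<1::real}"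
    unfolding Lm_def
  proof (rule measure_mono_fmeasurable)
    show "SL j y d \<subseteq> {0..<1}" unfolding SL_def by auto
    show "SL j y d \<in> sets lebesgue" using SL_meas by (simp add: fmeasurable_def)
    show "{0..<1::real} \<in> lmeasurable" by (intro bounded_set_imp_lmeasurable) auto
  qed
  then show ?thesis by simp
qed

lemma aa_le1: "aa j y \<le> 1" using Lm_le1 aa_Lm by simp
lemma aa_nn: "aa j y \<ge> 0" unfolding aa_def by simp

lemma A_empty: assumes "\<bar>y\<bar> > BF" shows "A j y = {}"
proof -
  have "F j x \<noteq> y" if "x \<in> {0..<1}" for x using F_bound[of x j] that assms by auto
  then show ?thesis unfolding A_def by blast
qed

lemma aa_big: "\<bar>y\<bar> > BF \<Longrightarrow> aa j y = 0"
  unfolding aa_def using A_empty by simp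

lemma SL_empty: assumes "\<bar>y\<bar> > BF + d" shows "SL j y d = {}"
proof -
  have "\<not> \<bar>F j x - y\<bar> \<le> d" if "x \<in> {0..<1}" for x using F_bound[of x j] that assms by auto
  then show ?thesis unfolding SL_def by blast
qed

lemma usc:
  assumes conv: "\<forall>k. eventually (\<lambda>n. js n k = jl k) sequentially"
    and ylim: "ys \<longlonglongrightarrow> yl" and dlim: "ds \<longlonglongrightarrow> 0" and e: "e > 0"
  shows "eventually (\<lambda>n. Lm (js n) (ys n) (ds n) \<le> aa jl yl + e) sequentially"
proof -
  define S where "S n = SL jl yl (1 / real (Suc n))" for n
  have dec: "decseq S" unfolding S_def
  proof (intro decseq_SucI SL_mono)
    fix n show "1 / real (Suc (Suc n)) \<le> 1 / real (Suc n)"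
      by (intro divide_left_mono) auto
  qed
  have inter: "(\<Inter>n. S n) = A jl yl"
  proof
    show "(\<Inter>n. S n) \<subseteq> A jl yl"
    proof
      fix x assume x: "x \<in> (\<Inter>n. S n)"
      then have le: "\<bar>F jl x - yl\<bar> \<le> 1 / real (Suc n)" for n unfolding S_def SL_def by auto
      have "\<bar>F jl x - yl\<bar> \<le> 0"
      proof (rule field_le_epsilon)
        fix \<epsilon> :: real assume "\<epsilon> > 0"
        then obtain n where "1 / real (Suc n) < \<epsilon>" using nat_approx_posE by blast
        then show "\<bar>F jl x - yl\<bar> \<le> 0 + \<epsilon>" using le[of n] by simp
      qed
      then show "x \<in> A jl yl" using x unfolding S_def SL_def A_def by auto
    qed
    show "A jl yl \<subseteq> (\<Inter>n. S n)" unfolding S_def SL_def A_def by auto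
  qed
  have "(\<lambda>n. measure lebesgue (S n)) \<longlonglongrightarrow> measure lebesgue (\<Inter>n. S n)"
  proof (rule Lim_measure_decseq[OF _ dec])
    show "range S \<subseteq> sets lebesgue" using SL_meas unfolding S_def fmeasurable_def by blast
    show "emeasure lebesgue (S n) \<noteq> \<infinity>" for n using SL_meas[of jl yl "1 / real (Suc n)"]
      unfolding S_def fmeasurable_def by auto
  qed
  then have "(\<lambda>n. measure lebesgue (S n)) \<longlonglongrightarrow> aa jl yl" unfolding inter aa_def .
  then have "eventually (\<lambda>n. measure lebesgue (S n) < aa jl yl + e) sequentially"
    using e by (intro order_tendstoD) auto
  then obtain n1 where "\<forall>n\<ge>n1. measure lebesgue (S n) < aa jl yl + e"
    unfolding eventually_sequentially by blast
  then have n0: "measure lebesgue (S n1) < aa jl yl + e" by simp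
  define n0 where "n0 = n1"
  have n0: "measure lebesgue (S n0) < aa jl yl + e" using n0 n0_def by simp
  define r where "r = 1 / real (Suc n0)"
  have r: "r > 0" unfolding r_def by simp
  define K where "K = 2 * Dr * \<gamma> / (1 - \<gamma>)"
  have K: "K \<ge> 0" unfolding K_def using Dr_nn gam_pos gam1 by simp
  obtain N where N: "\<gamma> ^ N < (r / 3) / (K + 1)"
    using real_arch_pow_inv[of "(r / 3) / (K + 1)" \<gamma>] r K gam1 by auto
  have KN: "2 * Dr * \<gamma> * \<gamma> ^ N / (1 - \<gamma>) \<le> r / 3"
  proof -
    have "2 * Dr * \<gamma> * \<gamma> ^ N / (1 - \<gamma>) = K * \<gamma> ^ N" unfolding K_def by simp
    also have "\<dots> \<le> (K + 1) * \<gamma> ^ N" using gam_pos by (simp add: mult_right_mono)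
    also have "\<dots> \<le> r / 3" using N K by (simp add: field_simps)
    finally show ?thesis .
  qed
  have ev1: "eventually (\<lambda>n. \<forall>k\<in>{1..N}. js n k = jl k) sequentially"
    using conv by (intro eventually_ball_finite) auto
  have r3: "r / 3 > 0" using r by simp
  have ev2: "eventually (\<lambda>n. dist (ys n) yl < r / 3) sequentially"
    using ylim r3 tendsto_iff by blast
  have ev3: "eventually (\<lambda>n. dist (ds n) 0 < r / 3) sequentially"
    using dlim r3 tendsto_iff by blast
  show ?thesis
    using ev1 ev2 ev3
  proof eventually_elim
    case (elim n)
    have "SL (js n) (ys n) (ds n) \<subseteq> S n0"
    proof
      fix x assume x: "x \<in> SL (js n) (ys n) (ds n)"
      then have x01: "x \<in> {0..1}" "x \<in> {0..<1}" unfolding SL_def by auto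
      have "\<bar>F (js n) x - F jl x\<bar> \<le> r / 3"
        using F_agree[OF elim(1) x01(1)] KN by linarith
      moreover have "\<bar>F (js n) x - ys n\<bar> \<le> ds n" using x unfolding SL_def by blast
      moreover have "\<bar>ys n - yl\<bar> < r / 3" "\<bar>ds n\<bar> < r / 3" using elim(2,3) unfolding dist_real_def by auto
      ultimately have "\<bar>F jl x - yl\<bar> \<le> r" by linarith
      then show "x \<in> S n0" using x01 unfolding S_def SL_def r_def by auto
    qed
    then have "Lm (js n) (ys n) (ds n) \<le> measure lebesgue (S n0)"
      unfolding Lm_def
    proof (rule measure_mono_fmeasurable)
      show "SL (js n) (ys n) (ds n) \<in> sets lebesgue" using SL_meas fmeasurable_def by blast
      show "S n0 \<in> lmeasurable" unfolding S_def by (rule SL_meas)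
    qed
    then show ?case using n0 by simp
  qed
qed

end



lemma lip_periodic:
  fixes h :: "real \<Rightarrow> real"
  assumes per: "\<And>x. h (x + 1) = h x" and L: "L \<ge> 0"
    and lip: "\<And>x x'. x \<in> {0..1} \<Longrightarrow> x' \<in> {0..1} \<Longrightarrow> \<bar>h x - h x'\<bar> \<le> L * \<bar>x - x'\<bar>"
  shows "L-lipschitz_on UNIV h"
proof -
  have pn: "h (x + real n) = h x" for x n
  proof (induction n)
    case (Suc n)
    have "h (x + real (Suc n)) = h ((x + real n) + 1)" by (simp add: algebra_simps)
    then show ?case using per Suc by simp
  qed simp
  have pi: "h (x + real_of_int k) = h x" for x k
  proof (cases "k \<ge> 0")
    case True then show ?thesis using pn[of x "nat k"] by simp
  next
    case False then show ?thesis using pn[of "x + real_of_int k" "nat (-k)"] by simp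
  qed
  have unit: "\<bar>h x - h x'\<bar> \<le> L * \<bar>x - x'\<bar>"
    if "x \<in> {real_of_int k..real_of_int k + 1}" "x' \<in> {real_of_int k..real_of_int k + 1}" for x x' k
  proof -
    have "\<bar>h (x - real_of_int k) - h (x' - real_of_int k)\<bar> \<le> L * \<bar>(x - real_of_int k) - (x' - real_of_int k)\<bar>"
      using that by (intro lip) auto
    moreover have "h (x - real_of_int k) = h x" using pi[of "x - real_of_int k" k] by simp
    moreover have "h (x' - real_of_int k) = h x'" using pi[of "x' - real_of_int k" k] by simp
    ultimately show ?thesis by simp
  qed
  have main: "\<bar>h x - h x'\<bar> \<le> L * (x' - x)" if xx: "x \<le> x'" for x x'
  proof (cases "\<lfloor>x'\<rfloor> < \<lceil>x\<rceil>")
    case True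
    have "\<lfloor>x\<rfloor> \<le> \<lfloor>x'\<rfloor>" using xx floor_mono by blast
    moreover have "\<lceil>x\<rceil> \<le> \<lfloor>x\<rfloor> + 1" by linarith
    ultimately have k: "\<lfloor>x'\<rfloor> = \<lfloor>x\<rfloor>" using True by linarith
    have "\<bar>h x - h x'\<bar> \<le> L * \<bar>x - x'\<bar>"
      by (rule unit[of _ "\<lfloor>x\<rfloor>"]) (use k xx in \<open>auto, linarith+\<close>)
    then show ?thesis using xx by simp
  next
    case False
    define p where "p = real_of_int \<lceil>x\<rceil>"
    define q where "q = real_of_int \<lfloor>x'\<rfloor>"
    have pq: "p \<le> q" using False unfolding p_def q_def by simp
    have hpq: "h p = h q"
      using pi[of 0 "\<lceil>x\<rceil>"] pi[of 0 "\<lfloor>x'\<rfloor>"] unfolding p_def q_def by simp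
    have x1: "x \<in> {real_of_int (\<lceil>x\<rceil> - 1)..real_of_int (\<lceil>x\<rceil> - 1) + 1}"
      using ceiling_correct[of x] by auto
    have p1: "p \<in> {real_of_int (\<lceil>x\<rceil> - 1)..real_of_int (\<lceil>x\<rceil> - 1) + 1}" unfolding p_def by simp
    have x2: "x' \<in> {real_of_int \<lfloor>x'\<rfloor>..real_of_int \<lfloor>x'\<rfloor> + 1}"
      using floor_correct[of x'] by auto
    have q2: "q \<in> {real_of_int \<lfloor>x'\<rfloor>..real_of_int \<lfloor>x'\<rfloor> + 1}" unfolding q_def by simp
    have "\<bar>h x - h p\<bar> \<le> L * \<bar>x - p\<bar>" by (rule unit[OF x1 p1])
    moreover have "\<bar>h q - h x'\<bar> \<le> L * \<bar>q - x'\<bar>" by (rule unit[OF q2 x2])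
    moreover have "x \<le> p" "q \<le> x'" unfolding p_def q_def by linarith+
    ultimately have "\<bar>h x - h x'\<bar> \<le> L * (p - x) + L * (x' - q)" using hpq by simp
    also have "\<dots> = L * ((p - x) + (x' - q))" by (simp add: algebra_simps)
    also have "\<dots> \<le> L * (x' - x)" using pq L by (intro mult_left_mono) auto
    finally show ?thesis .
  qed
  show ?thesis
    unfolding lipschitz_on_def dist_real_def
  proof (intro conjI L ballI)
    fix x x' :: real
    show "\<bar>h x - h x'\<bar> \<le> L * \<bar>x - x'\<bar>"
      using main[of x x'] main[of x' x] by (cases "x \<le> x'") (auto simp: abs_minus_commute)
  qed
qed

context wdata begin

definition "cc i j = \<phi> (real i / real b) - Gam j (real i / real b)"

lemma A_piece:
  assumes i: "i < b"
  shows "A j y \<inter> {real i / real b..<(real i + 1) / real b}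
    = (\<lambda>t. (1 / real b) *\<^sub>R t + real i / real b) ` A (cns i j) ((y - cc i j) / lam)"
proof (intro equalityI subsetI)
  fix x assume x: "x \<in> A j y \<inter> {real i / real b..<(real i + 1) / real b}"
  define t where "t = real b * x - real i"
  have xt: "x = (t + real i) / real b" using bpos by (simp add: t_def)
  have "real i \<le> real b * x" "real b * x < real i + 1"
    using x bpos by (auto simp: field_simps)
  then have t01: "t \<in> {0..<1}" by (auto simp: t_def)
  have "F j x = lam * F (cns i j) t + cc i j" using F_cns[of t j i] t01 xt cc_def by simp
  moreover have "F j x = y" using x by (simp add: A_def)
  ultimately have "F (cns i j) t = (y - cc i j) / lam" using lam_pos by (simp add: field_simps)
  then have "t \<in> A (cns i j) ((y - cc i j) / lam)" using t01 by (simp add: A_def)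
  moreover have "x = (1 / real b) *\<^sub>R t + real i / real b" using xt by (simp add: add_divide_distrib)
  ultimately show "x \<in> (\<lambda>t. (1 / real b) *\<^sub>R t + real i / real b) ` A (cns i j) ((y - cc i j) / lam)"
    by blast
next
  fix x assume "x \<in> (\<lambda>t. (1 / real b) *\<^sub>R t + real i / real b) ` A (cns i j) ((y - cc i j) / lam)"
  then obtain t where t: "t \<in> A (cns i j) ((y - cc i j) / lam)" and xt0: "x = (1 / real b) *\<^sub>R t + real i / real b"
    by blast
  have xt: "x = (t + real i) / real b" using xt0 by (simp add: add_divide_distrib)
  have t01: "0 \<le> t" "t < 1" using t by (auto simp: A_def)
  have ib: "real i + 1 \<le> real b" using i by simp
  have lo: "real i / real b \<le> x" using xt t01 bpos by (simp add: divide_right_mono)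
  have hi: "x < (real i + 1) / real b" using xt t01 bpos by (simp add: divide_strict_right_mono)
  have h1: "(real i + 1) / real b \<le> 1" using ib bpos by simp
  have h0: "0 \<le> real i / real b" by simp
  have "0 \<le> x" "x < 1" using lo hi h1 h0 by linarith+
  then have x01: "x \<in> {0..<1}" by simp
  have "F j x = lam * F (cns i j) t + cc i j" using F_cns[of t j i] t01 xt cc_def by simp
  also have "F (cns i j) t = (y - cc i j) / lam" using t by (simp add: A_def)
  finally have "F j x = y" using lam_pos by simp
  then show "x \<in> A j y \<inter> {real i / real b..<(real i + 1) / real b}"
    using x01 lo hi by (simp add: A_def)
qed

lemma aa_decomp: "aa j y = (\<Sum>i<b. aa (cns i j) ((y - cc i j) / lam)) / real b"
proof -
  define P where "P i = A j y \<inter> {real i / real b..<(real i + 1) / real b}" for i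
  have U: "A j y = (\<Union>i\<in>{..<b}. P i)"
  proof (intro equalityI subsetI)
    fix x assume x: "x \<in> A j y"
    then have x01: "0 \<le> x" "x < 1" by (auto simp: A_def)
    define i where "i = nat \<lfloor>real b * x\<rfloor>"
    have e: "real i = real_of_int \<lfloor>real b * x\<rfloor>" unfolding i_def using x01 bpos by simp
    have fl: "real i \<le> real b * x" "real b * x < real i + 1"
      using e floor_correct[of "real b * x"] by auto
    have "real b * x < real b" using x01 bpos by simp
    then have ib: "i < b" using fl by linarith
    have "real i / real b \<le> x" "x < (real i + 1) / real b"
      using fl bpos by (auto simp: field_simps)
    then show "x \<in> (\<Union>i\<in>{..<b}. P i)" using x ib unfolding P_def by auto
  qed (auto simp: P_def)
  have disj: "disjoint_family_on P {..<b}"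
    unfolding disjoint_family_on_def
  proof (intro ballI impI)
    fix i i' assume ii: "i \<in> {..<b}" "i' \<in> {..<b}" "i \<noteq> i'"
    show "P i \<inter> P i' = {}"
    proof (rule ccontr)
      assume "P i \<inter> P i' \<noteq> {}"
      then obtain x where "x \<in> P i" "x \<in> P i'" by blast
      then have "real i \<le> real b * x" "real b * x < real i + 1" "real i' \<le> real b * x" "real b * x < real i' + 1"
        using bpos unfolding P_def by (auto simp: field_simps)
      then have "i < i' + 1" "i' < i + 1" by linarith+
      then show False using ii by simp
    qed
  qed
  have Pm: "P i \<in> lmeasurable" for i
    unfolding P_def by (rule fmeasurable_Int_fmeasurable[OF A_meas]) simp
  have "aa j y = measure lebesgue (\<Union>i\<in>{..<b}. P i)" unfolding aa_def using U by simp
  also have "\<dots> = (\<Sum>i<b. measure lebesgue (P i))"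
  proof (rule measure_finite_Union)
    show "P ` {..<b} \<subseteq> sets lebesgue" using Pm fmeasurable_def by blast
    show "emeasure lebesgue (P i) \<noteq> \<infinity>" for i
    proof -
      have "emeasure lebesgue (P i) < \<infinity>" using Pm[of i] unfolding fmeasurable_def by blast
      then show ?thesis by (metis less_imp_neq)
    qed
  qed (use disj in auto)
  also have "\<dots> = (\<Sum>i<b. aa (cns i j) ((y - cc i j) / lam) / real b)"
  proof (rule sum.cong)
    fix i assume "i \<in> {..<b}"
    then have "P i = (\<lambda>t. (1 / real b) *\<^sub>R t + real i / real b) ` A (cns i j) ((y - cc i j) / lam)"
      unfolding P_def by (intro A_piece) auto
    then show "measure lebesgue (P i) = aa (cns i j) ((y - cc i j) / lam) / real b"
      unfolding aa_def using measure_lebesgue_affine[of "1 / real b" "real i / real b" "A (cns i j) ((y - cc i j) / lam)"]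
      by simp
  qed simp
  finally show ?thesis by (simp add: sum_divide_distrib)
qed

definition "Msup = Sup {aa j y | j y. j \<in> SigmaSeq b}"

lemma zero_Sigma: "(\<lambda>_. 0) \<in> SigmaSeq b" using b2 by (simp add: SigmaSeq_def)

lemma aa_le_M: "j \<in> SigmaSeq b \<Longrightarrow> aa j y \<le> Msup"
  unfolding Msup_def by (rule cSup_upper) (use aa_le1 in \<open>auto intro!: bdd_aboveI[of _ 1]\<close>)

lemma M_nn: "Msup \<ge> 0" using aa_le_M[OF zero_Sigma, of 0] aa_nn[of "\<lambda>_. 0" 0] by linarith

lemma aa_M_cns:
  assumes j: "j \<in> SigmaSeq b" and e: "aa j y = Msup" and i: "i < b"
  shows "aa (cns i j) ((y - cc i j) / lam) = Msup"
proof (rule ccontr)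
  assume ne: "aa (cns i j) ((y - cc i j) / lam) \<noteq> Msup"
  have le: "\<forall>k\<in>{..<b}. aa (cns k j) ((y - cc k j) / lam) \<le> Msup"
    using aa_le_M cns_Sigma j by auto
  have "aa (cns i j) ((y - cc i j) / lam) \<le> Msup" using le i by auto
  then have "aa (cns i j) ((y - cc i j) / lam) < Msup" using ne by simp
  then have "\<exists>k\<in>{..<b}. aa (cns k j) ((y - cc k j) / lam) < Msup"
    using i by blast
  then have "(\<Sum>k<b. aa (cns k j) ((y - cc k j) / lam)) < (\<Sum>k<b. Msup)"
    using le by (intro sum_strict_mono_ex1) auto
  then have "real b * aa j y < real b * Msup" using aa_decomp[of j y] bpos by (simp add: field_simps)
  then have "aa j y < Msup" using bpos by simp
  then show False using e by simp
qed

lemma dense_pts: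
  "\<forall>j y. j \<in> SigmaSeq b \<longrightarrow> aa j y = Msup \<longrightarrow> Msup > 0 \<longrightarrow>
     (\<forall>k<b ^ n. \<exists>x\<in>A j y. real k / real b ^ n \<le> x \<and> x < (real k + 1) / real b ^ n)"
proof (induction n)
  case 0
  show ?case
  proof (intro allI impI)
    fix j y k assume h: "j \<in> SigmaSeq b" "aa j y = Msup" "Msup > 0" and k: "k < b ^ 0"
    have "A j y \<noteq> {}" using h unfolding aa_def by auto
    then obtain x where "x \<in> A j y" by blast
    then show "\<exists>x\<in>A j y. real k / real b ^ 0 \<le> x \<and> x < (real k + 1) / real b ^ 0"
      using k by (auto simp: A_def)
  qed
next
  case (Suc n)
  show ?case
  proof (intro allI impI)
    fix j y k assume h: "j \<in> SigmaSeq b" "aa j y = Msup" "Msup > 0" and k: "k < b ^ Suc n"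
    define i where "i = k div b ^ n"
    define k' where "k' = k mod b ^ n"
    have bn: "b ^ n > 0" using b2 by simp
    have i: "i < b" unfolding i_def using k by (simp add: less_mult_imp_div_less mult.commute)
    have k': "k' < b ^ n" unfolding k'_def using bn by simp
    have kk: "real k = real k' + real i * real b ^ n"
      unfolding i_def k'_def by (metis div_mult_mod_eq of_nat_add of_nat_mult of_nat_power add.commute)
    obtain t where t: "t \<in> A (cns i j) ((y - cc i j) / lam)" "real k' / real b ^ n \<le> t" "t < (real k' + 1) / real b ^ n"
      using Suc[rule_format, OF cns_Sigma[OF i h(1)] aa_M_cns[OF h(1) h(2) i] h(3) k'] by blast
    define x where "x = (1 / real b) *\<^sub>R t + real i / real b"
    have "x \<in> A j y \<inter> {real i / real b..<(real i + 1) / real b}"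
      unfolding A_piece[OF i] x_def using t(1) by blast
    then have xA: "x \<in> A j y" by blast
    have xt: "x = (t + real i) / real b" unfolding x_def by (simp add: add_divide_distrib)
    have bnp: "real b ^ n > 0" using bpos by simp
    have "real k / real b ^ Suc n = (real k' / real b ^ n + real i) / real b"
      unfolding kk using bnp bpos by (simp add: field_simps)
    also have "\<dots> \<le> x" unfolding xt using t(2) bpos by (simp add: divide_right_mono)
    finally have lo: "real k / real b ^ Suc n \<le> x" .
    have "x < ((real k' + 1) / real b ^ n + real i) / real b"
      unfolding xt using t(3) bpos by (simp add: divide_strict_right_mono)
    also have "\<dots> = (real k + 1) / real b ^ Suc n"
      unfolding kk using bnp bpos by (simp add: field_simps)
    finally have hi: "x < (real k + 1) / real b ^ Suc n" .
    show "\<exists>x\<in>A j y. real k / real b ^ Suc n \<le> x \<and> x < (real k + 1) / real b ^ Suc n"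
      using xA lo hi by blast
  qed
qed

lemma F_const:
  assumes j: "j \<in> SigmaSeq b" and e: "aa j y = Msup" and M: "Msup > 0" and x0: "x0 \<in> {0..1}"
  shows "F j x0 = y"
proof -
  have cl: "closed {x. F j x = y}" by (intro closed_Collect_eq continuous_intros F_cont)
  have "x0 \<in> closure (A j y)"
    unfolding closure_approachable
  proof (intro allI impI)
    fix \<epsilon> :: real assume ep: "\<epsilon> > 0"
    have b1: "1 / real b < 1" using bpos by simp
    obtain n where n: "(1 / real b) ^ n < \<epsilon>" using real_arch_pow_inv[OF ep b1] by blast
    have bnp: "real b ^ n > 0" using bpos by simp
    have bn1: "real b ^ n \<ge> 1" using bpos by simp
    obtain k where k: "k < b ^ n" "real k / real b ^ n \<le> x0 + 1 / real b ^ n" "x0 \<le> (real k + 1) / real b ^ n"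
      "real k / real b ^ n \<le> x0"
    proof (cases "x0 < 1")
      case True
      define k where "k = nat \<lfloor>x0 * real b ^ n\<rfloor>"
      have e: "real k = real_of_int \<lfloor>x0 * real b ^ n\<rfloor>" unfolding k_def using x0 bnp by simp
      have f1: "real k \<le> x0 * real b ^ n" "x0 * real b ^ n < real k + 1"
        using e floor_correct[of "x0 * real b ^ n"] by auto
      have "x0 * real b ^ n < real b ^ n" using True bnp by simp
      then have "real k < real b ^ n" using f1 by linarith
      then have "k < b ^ n" by (metis of_nat_less_iff of_nat_power)
      moreover have "real k / real b ^ n \<le> x0" "x0 \<le> (real k + 1) / real b ^ n"
        using f1 bnp by (auto simp: field_simps)
      moreover have "0 \<le> 1 / real b ^ n" using bnp by simp
      moreover have "real k / real b ^ n \<le> x0 + 1 / real b ^ n" using calculation(2,4) by linarith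
      ultimately show ?thesis using that by blast
    next
      case False
      then have x1: "x0 = 1" using x0 by simp
      define k where "k = b ^ n - 1"
      have kb: "k < b ^ n" unfolding k_def using b2 by simp
      have rk: "real k = real b ^ n - 1" unfolding k_def using b2 by (simp add: of_nat_diff)
      have A3: "real k / real b ^ n \<le> x0" unfolding rk x1 using bnp by (simp add: field_simps)
      have A2: "x0 \<le> (real k + 1) / real b ^ n" unfolding rk x1 using bnp by simp
      have "0 \<le> 1 / real b ^ n" using bnp by simp
      then have A1: "real k / real b ^ n \<le> x0 + 1 / real b ^ n" using A3 by linarith
      show ?thesis by (rule that[OF kb A1 A2 A3])
    qed
    obtain x where x: "x \<in> A j y" "real k / real b ^ n \<le> x" "x < (real k + 1) / real b ^ n"
      using dense_pts[rule_format, OF j e M k(1)] by blast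
    have "\<bar>x - x0\<bar> \<le> 1 / real b ^ n"
      using x(2,3) k(3,4) bnp by (auto simp: field_simps abs_le_iff)
    also have "\<dots> = (1 / real b) ^ n" by (simp add: power_one_over)
    finally have "dist x x0 < \<epsilon>" using n by (simp add: dist_real_def)
    then show "\<exists>x\<in>A j y. dist x x0 < \<epsilon>" using x(1) by blast
  qed
  moreover have "closure (A j y) \<subseteq> {x. F j x = y}"
    by (rule closure_minimal) (use cl in \<open>auto simp: A_def\<close>)
  ultimately show ?thesis by blast
qed

lemma M_zero:
  assumes nl: "\<not> (\<exists>C. C-lipschitz_on UNIV W)"
    and att: "\<exists>j y. j \<in> SigmaSeq b \<and> aa j y = Msup"
  shows "Msup = 0"
proof (rule ccontr)
  assume "Msup \<noteq> 0"
  then have M: "Msup > 0" using M_nn by simp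
  obtain j y where j: "j \<in> SigmaSeq b" "aa j y = Msup" using att by blast
  have "\<bar>W x - W x'\<bar> \<le> CY * \<bar>x - x'\<bar>" if "x \<in> {0..1}" "x' \<in> {0..1}" for x x'
  proof -
    have "W x = y + Gam j x" using F_const[OF j M that(1)] unfolding F_def by simp
    moreover have "W x' = y + Gam j x'" using F_const[OF j M that(2)] unfolding F_def by simp
    ultimately show ?thesis using Gam_lip[of j x x'] by simp
  qed
  then have "CY-lipschitz_on UNIV W" by (intro lip_periodic W_per CY_nn)
  then show False using nl by blast
qed

end



lemma compact_digits: "compact (PiE UNIV (\<lambda>_::nat. {..<(b::nat)}))"
proof -
  have "compactin (product_topology (\<lambda>i. euclidean) UNIV) (PiE UNIV (\<lambda>_::nat. {..<b}))"
    unfolding compactin_PiE by (auto intro: finite_imp_compact)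
  then show ?thesis unfolding euclidean_product_topology by simp
qed

lemma seq_compact_Sigma:
  fixes js :: "nat \<Rightarrow> nat \<Rightarrow> nat" and ys :: "nat \<Rightarrow> real"
  assumes js: "\<forall>n. js n \<in> SigmaSeq b" and ys: "\<forall>n. \<bar>ys n\<bar> \<le> B" and b: "b > 0"
  shows "\<exists>r jl yl. strict_mono r \<and> jl \<in> SigmaSeq b \<and>
     (\<forall>k. eventually (\<lambda>n. ((js (r n))(0 := 0)) k = jl k) sequentially) \<and> ((\<lambda>n. ys (r n)) \<longlonglongrightarrow> yl)"
proof -
  define K where "K = PiE UNIV (\<lambda>_::nat. {..<b})"
  define f where "f n = ((js n)(0 := 0), ys n)" for n
  have cb: "compact (cball (0::real) B)" by (rule compact_cball)
  have c: "compact (K \<times> cball (0::real) B)" unfolding K_def by (rule compact_Times[OF compact_digits cb])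
  have fin: "f n \<in> K \<times> cball (0::real) B" for n
    using js ys b unfolding f_def K_def SigmaSeq_def by (auto simp: PiE_def Pi_def)
  obtain l r where l: "l \<in> K \<times> cball (0::real) B" and r: "strict_mono r" and lim: "(f \<circ> r) \<longlonglongrightarrow> l"
    using compact_imp_seq_compact[OF c] fin unfolding seq_compact_def by metis
  obtain jl yl where lp: "l = (jl, yl)" by (cases l)
  have jlK: "jl \<in> K" using l lp by auto
  have l1: "(\<lambda>n. (js (r n))(0 := 0)) \<longlonglongrightarrow> jl"
    using tendsto_fst[OF lim] lp by (simp add: f_def o_def)
  have l2: "(\<lambda>n. ys (r n)) \<longlonglongrightarrow> yl"
    using tendsto_snd[OF lim] lp by (simp add: f_def o_def)
  have "eventually (\<lambda>n. ((js (r n))(0 := 0)) k = jl k) sequentially" for k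
  proof -
    have "(\<lambda>n. ((js (r n))(0 := 0)) k) \<longlonglongrightarrow> jl k"
      by (rule continuous_on_tendsto_compose[OF continuous_on_product_coordinates l1]) auto
    then show ?thesis by (simp only: tendsto_discrete)
  qed
  moreover have "jl \<in> SigmaSeq b" using jlK unfolding K_def SigmaSeq_def by auto
  ultimately show ?thesis using r l2 by blast
qed

context wdata begin

lemma Gr_upd0: "Gr x (j(0 := c)) n = Gr x j n"
  by (induction n) (auto simp: Gr.simps)

lemma F_upd0: "F (j(0 := c)) = F j"
proof -
  have "Y t (j(0 := c)) = Y t j" for t unfolding Y_alt Gr_upd0 ..
  then have "Gam (j(0 := c)) = Gam j" unfolding Gammafun_def by presburger
  then show ?thesis unfolding F_def by (simp add: fun_eq_iff)
qed

lemma Lm_upd0: "Lm (j(0 := c)) y d = Lm j y d"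
  unfolding Lm_def SL_def F_upd0 ..

lemma usc':
  assumes conv: "\<forall>k. eventually (\<lambda>n. ((js n)(0 := 0)) k = jl k) sequentially"
    and ylim: "ys \<longlonglongrightarrow> yl" and dlim: "ds \<longlonglongrightarrow> 0" and e: "e > 0"
  shows "eventually (\<lambda>n. Lm (js n) (ys n) (ds n) \<le> aa jl yl + e) sequentially"
proof -
  have "eventually (\<lambda>n. Lm ((js n)(0 := 0)) (ys n) (ds n) \<le> aa jl yl + e) sequentially"
    by (rule usc[OF conv ylim dlim e])
  then show ?thesis unfolding Lm_upd0 .
qed

lemma M_attained: "\<exists>j y. j \<in> SigmaSeq b \<and> aa j y = Msup"
proof (cases "Msup = 0")
  case True
  have "aa (\<lambda>_. 0) (BF + 1) = 0" by (rule aa_big) (use Cphi_nn CY_nn lam1 in \<open>simp add: BF_def\<close>)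
  then show ?thesis using True zero_Sigma by (intro exI[of _ "\<lambda>_. 0"] exI[of _ "BF + 1"]) simp
next
  case False
  then have Mp: "Msup > 0" using M_nn by simp
  let ?X = "{aa j y | j y. j \<in> SigmaSeq b}"
  have ne: "?X \<noteq> {}" using zero_Sigma by blast
  have bdd: "bdd_above ?X" using aa_le1 by (auto intro!: bdd_aboveI[of _ 1])
  have "\<forall>n. \<exists>jy. fst jy \<in> SigmaSeq b \<and> \<bar>snd jy\<bar> \<le> BF \<and> Msup - 1 / real (Suc n) < aa (fst jy) (snd jy)"
  proof
    fix n
    have "Msup - 1 / real (Suc n) < Msup" by simp
    then have "\<exists>x\<in>?X. Msup - 1 / real (Suc n) < x"
      using less_cSup_iff[OF ne bdd] unfolding Msup_def by blast
    then obtain j y where jy: "j \<in> SigmaSeq b" "Msup - 1 / real (Suc n) < aa j y"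
      by blast
    define y' where "y' = (if \<bar>y\<bar> \<le> BF then y else 0)"
    have "aa j y \<le> aa j y'"
      using aa_big[of y j] aa_nn[of j y'] unfolding y'_def by auto
    moreover have "0 \<le> BF" unfolding BF_def using Cphi_nn CY_nn lam1 by simp
    moreover have "\<bar>y'\<bar> \<le> BF" unfolding y'_def using calculation(2) by auto
    ultimately show "\<exists>jy. fst jy \<in> SigmaSeq b \<and> \<bar>snd jy\<bar> \<le> BF \<and> Msup - 1 / real (Suc n) < aa (fst jy) (snd jy)"
      using jy by (intro exI[of _ "(j, y')"]) auto
  qed
  then obtain jy where jy: "\<And>n. fst (jy n) \<in> SigmaSeq b" "\<And>n. \<bar>snd (jy n)\<bar> \<le> BF"
    "\<And>n. Msup - 1 / real (Suc n) < aa (fst (jy n)) (snd (jy n))"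
    by metis
  obtain r jl yl where r: "strict_mono r" and jl: "jl \<in> SigmaSeq b"
    and conv: "\<forall>k. eventually (\<lambda>n. ((fst (jy (r n)))(0 := 0)) k = jl k) sequentially"
    and ylim: "(\<lambda>n. snd (jy (r n))) \<longlonglongrightarrow> yl"
  proof -
    have h1: "\<forall>n. fst (jy n) \<in> SigmaSeq b" using jy by blast
    have h2: "\<forall>n. \<bar>snd (jy n)\<bar> \<le> BF" using jy by blast
    have hb: "b > 0" using b2 by simp
    show ?thesis using seq_compact_Sigma[OF h1 h2 hb] that by blast
  qed
  have "Msup \<le> aa jl yl"
  proof (rule field_le_epsilon)
    fix e :: real assume e: "e > 0"
    have ev1: "eventually (\<lambda>n. Lm (fst (jy (r n))) (snd (jy (r n))) 0 \<le> aa jl yl + e / 2) sequentially"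
      using usc'[OF conv ylim tendsto_const, of "e / 2"] e by simp
    obtain n0 where n0: "1 / real (Suc n0) < e / 2" using e nat_approx_posE[of "e / 2"] by auto
    have ev2: "eventually (\<lambda>n. n \<ge> n0) sequentially" by (rule eventually_ge_at_top)
    obtain N where "\<forall>n\<ge>N. Lm (fst (jy (r n))) (snd (jy (r n))) 0 \<le> aa jl yl + e / 2 \<and> n \<ge> n0"
      using eventually_conj[OF ev1 ev2] unfolding eventually_sequentially by blast
    then have n: "Lm (fst (jy (r N))) (snd (jy (r N))) 0 \<le> aa jl yl + e / 2" "N \<ge> n0" by auto
    have "r N \<ge> N" using r by (rule seq_suble)
    then have "1 / real (Suc (r N)) \<le> 1 / real (Suc n0)" using n(2)
      by (intro divide_left_mono) auto
    moreover have "Msup - 1 / real (Suc (r N)) < aa (fst (jy (r N))) (snd (jy (r N)))" by (rule jy(3))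
    ultimately show "Msup \<le> aa jl yl + e" using n(1) n0 aa_Lm[of "fst (jy (r N))" "snd (jy (r N))"] by linarith
  qed
  moreover have "aa jl yl \<le> Msup" by (rule aa_le_M[OF jl])
  ultimately show ?thesis using jl by (intro exI[of _ jl] exI[of _ yl]) auto
qed

lemma aa_zero:
  assumes nl: "\<not> (\<exists>C. C-lipschitz_on UNIV W)" and j: "j \<in> SigmaSeq b"
  shows "aa j y = 0"
  using M_zero[OF nl M_attained] aa_le_M[OF j, of y] aa_nn[of j y] by simp

lemma meas_to_leb: "(f::real \<Rightarrow> 'a::topological_space) \<in> borel_measurable borel \<Longrightarrow> f \<in> borel_measurable (lebesgue_on S)"
  by (metis measurable_lborel2 measurable_restrict_space1 measurable_completion)

lemma proj_measure_eq:
  "measure (proj_measure \<phi> lam b j) (ball y \<delta>) = measure lebesgue {x \<in> {0..<1}. F j x \<in> ball y \<delta>}"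
proof -
  have fm: "(\<lambda>x. (x, W x)) \<in> borel_measurable (lebesgue_on {0..<1})"
    by (intro meas_to_leb borel_measurable_continuous_onI continuous_intros W_cont)
  have pc: "continuous_on UNIV (proj_j \<phi> lam b j)"
    unfolding proj_j_def by (intro continuous_intros continuous_on_compose2[OF Gam_cont]) auto
  have pm: "proj_j \<phi> lam b j \<in> borel_measurable borel"
    by (rule borel_measurable_continuous_onI[OF pc])
  have "proj_measure \<phi> lam b j = distr (lebesgue_on {0..<1}) borel (proj_j \<phi> lam b j \<circ> (\<lambda>x. (x, W x)))"
    unfolding proj_measure_def graph_measure_def by (rule distr_distr[OF pm fm])
  moreover have "(proj_j \<phi> lam b j \<circ> (\<lambda>x. (x, W x))) = F j"
    unfolding proj_j_def F_def by (simp add: fun_eq_iff)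
  ultimately have pe: "proj_measure \<phi> lam b j = distr (lebesgue_on {0..<1}) borel (F j)" by simp
  have Fm: "F j \<in> borel_measurable (lebesgue_on {0..<1})" by (rule meas_to_leb[OF F_meas])
  have "measure (proj_measure \<phi> lam b j) (ball y \<delta>) = measure (lebesgue_on {0..<1}) (F j -` ball y \<delta> \<inter> {0..<1})"
    unfolding pe using measure_distr[OF Fm, of "ball y \<delta>"] by simp
  also have "\<dots> = measure lebesgue (F j -` ball y \<delta> \<inter> {0..<1})"
    by (rule measure_restrict_space) auto
  also have "F j -` ball y \<delta> \<inter> {0..<1} = {x \<in> {0..<1}. F j x \<in> ball y \<delta>}" by auto
  finally show ?thesis .
qed

lemma proj_le_Lm:
  "measure (proj_measure \<phi> lam b j) (ball y \<delta>) \<le> Lm j y \<delta>"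
proof -
  have sub: "{x \<in> {0..<1}. F j x \<in> ball y \<delta>} \<subseteq> SL j y \<delta>"
    unfolding SL_def by (auto simp: dist_real_def)
  have "{x \<in> {0..<1}. F j x \<in> ball y \<delta>} \<in> sets lebesgue"
  proof -
    have "open (F j -` ball y \<delta>)" by (rule open_vimage[OF open_ball F_cont])
    then have "{x. F j x \<in> ball y \<delta>} \<in> sets borel"
      by (intro borel_open) (simp add: vimage_def)
    then have "{0..<1} \<inter> {x. F j x \<in> ball y \<delta>} \<in> sets borel" by simp
    moreover have "{x \<in> {0..<1}. F j x \<in> ball y \<delta>} = {0..<1} \<inter> {x. F j x \<in> ball y \<delta>}" by blast
    ultimately show ?thesis using sets_leb_of_borel by simp
  qed
  then show ?thesis unfolding proj_measure_eq Lm_def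
    by (rule measure_mono_fmeasurable[OF sub _ SL_meas])
qed

lemma final:
  assumes nl: "\<not> (\<exists>C. C-lipschitz_on UNIV W)"
  shows "\<forall>\<epsilon>>0. \<exists>\<delta>>0. \<forall>j\<in>SigmaSeq b. \<forall>y::real. measure (proj_measure \<phi> lam b j) (ball y \<delta>) < \<epsilon>"
proof (rule ccontr)
  assume "\<not> ?thesis"
  then obtain \<epsilon> where ep: "\<epsilon> > 0" and bad0: "\<not> (\<exists>\<delta>>0. \<forall>j\<in>SigmaSeq b. \<forall>y::real. measure (proj_measure \<phi> lam b j) (ball y \<delta>) < \<epsilon>)"
    by blast
  have bad: "\<forall>\<delta>>0. \<exists>j\<in>SigmaSeq b. \<exists>y::real. measure (proj_measure \<phi> lam b j) (ball y \<delta>) \<ge> \<epsilon>"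
  proof (intro allI impI)
    fix \<delta> :: real assume "\<delta> > 0"
    then obtain j y where "j \<in> SigmaSeq b" "\<not> measure (proj_measure \<phi> lam b j) (ball y \<delta>) < \<epsilon>"
      using bad0 by blast
    then show "\<exists>j\<in>SigmaSeq b. \<exists>y::real. measure (proj_measure \<phi> lam b j) (ball y \<delta>) \<ge> \<epsilon>"
      by (intro bexI[of _ j] exI[of _ y]) auto
  qed
  have "\<forall>n. \<exists>jy. fst jy \<in> SigmaSeq b \<and> \<bar>snd jy\<bar> \<le> BF + 1 \<and> Lm (fst jy) (snd jy) (1 / real (Suc n)) \<ge> \<epsilon>"
  proof
    fix n
    obtain j y where jy: "j \<in> SigmaSeq b" "measure (proj_measure \<phi> lam b j) (ball y (1 / real (Suc n))) \<ge> \<epsilon>"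
      using bad[rule_format, of "1 / real (Suc n)"] by auto
    have L: "Lm j y (1 / real (Suc n)) \<ge> \<epsilon>" using jy(2) proj_le_Lm[of j y "1 / real (Suc n)"] by linarith
    have "\<bar>y\<bar> \<le> BF + 1"
    proof (rule ccontr)
      assume "\<not> \<bar>y\<bar> \<le> BF + 1"
      moreover have "1 / real (Suc n) \<le> 1" by simp
      ultimately have "\<bar>y\<bar> > BF + 1 / real (Suc n)" by linarith
      then have "Lm j y (1 / real (Suc n)) = 0" unfolding Lm_def using SL_empty by simp
      then show False using L ep by simp
    qed
    then show "\<exists>jy. fst jy \<in> SigmaSeq b \<and> \<bar>snd jy\<bar> \<le> BF + 1 \<and> Lm (fst jy) (snd jy) (1 / real (Suc n)) \<ge> \<epsilon>"
      using jy L by (intro exI[of _ "(j, y)"]) auto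
  qed
  then obtain jy where jy: "\<And>n. fst (jy n) \<in> SigmaSeq b" "\<And>n. \<bar>snd (jy n)\<bar> \<le> BF + 1"
    "\<And>n. Lm (fst (jy n)) (snd (jy n)) (1 / real (Suc n)) \<ge> \<epsilon>"
    by metis
  obtain r jl yl where r: "strict_mono r" and jl: "jl \<in> SigmaSeq b"
    and conv: "\<forall>k. eventually (\<lambda>n. ((fst (jy (r n)))(0 := 0)) k = jl k) sequentially"
    and ylim: "(\<lambda>n. snd (jy (r n))) \<longlonglongrightarrow> yl"
  proof -
    have h1: "\<forall>n. fst (jy n) \<in> SigmaSeq b" using jy by blast
    have h2: "\<forall>n. \<bar>snd (jy n)\<bar> \<le> BF + 1" using jy by blast
    have hb: "b > 0" using b2 by simp
    show ?thesis using seq_compact_Sigma[OF h1 h2 hb] that by blast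
  qed
  have dl: "(\<lambda>n. 1 / real (Suc (r n))) \<longlonglongrightarrow> 0"
  proof -
    have "(\<lambda>n. 1 / real (Suc n)) \<longlonglongrightarrow> 0" by (rule LIMSEQ_Suc[OF lim_inverse_n'])
    then show ?thesis using LIMSEQ_subseq_LIMSEQ[OF _ r] by (simp add: o_def)
  qed
  have "eventually (\<lambda>n. Lm (fst (jy (r n))) (snd (jy (r n))) (1 / real (Suc (r n))) \<le> aa jl yl + \<epsilon> / 2) sequentially"
    using usc'[OF conv ylim dl, of "\<epsilon> / 2"] ep by simp
  then obtain N where "\<forall>n\<ge>N. Lm (fst (jy (r n))) (snd (jy (r n))) (1 / real (Suc (r n))) \<le> aa jl yl + \<epsilon> / 2"
    unfolding eventually_sequentially by blast
  then have n: "Lm (fst (jy (r N))) (snd (jy (r N))) (1 / real (Suc (r N))) \<le> aa jl yl + \<epsilon> / 2" by simp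
  moreover have "aa jl yl = 0" by (rule aa_zero[OF nl jl])
  ultimately show False using jy(3)[of "r N"] ep by simp
qed

end

theorem mainTheorem11:
  fixes b :: nat and lam :: real and \<phi> :: "real \<Rightarrow> real"
  assumes "b \<ge> 2"
    and "1 / real b < lam" and "lam < 1"
    and "\<forall>x. \<phi> (x + 1) = \<phi> x"
    and "continuous_on UNIV \<phi>"
    and "piecewise_C2 \<phi>"
    and "\<not> (\<exists>C. C-lipschitz_on UNIV (Wfun \<phi> lam b))"
  shows "\<forall>\<epsilon>>0. \<exists>\<delta>>0. \<forall>j\<in>SigmaSeq b. \<forall>y::real.
           measure (proj_measure \<phi> lam b j) (ball y \<delta>) < \<epsilon>"
proof -
  interpret wsetup b lam \<phi> using assms by unfold_locales auto
  obtain a m G G' where "wdata b lam \<phi> a m G G'" using wdata_exists by blast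
  then interpret wdata b lam \<phi> a m G G' .
  show ?thesis by (rule final[OF assms(7)])
qed



end
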